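(* Let $N$ be a finite set of services, all controlled by a single (monopolistic) seller, let $v:2^N\to\mathbb{R}_+$ be a monotone submodular valuation with $v(\emptyset)=0$, and let $X$ be a maximal decision map for $v$. Then $$\max_{p\in\mathbb{R}^N_+}u_1(p)=\max_{S\subseteq N}\sum_{i\in S}v(\{i\}\mid S\setminus\{i\}),$$ where $u_1(p)=\sum_{j\in N}p_j\cdot\mathbf{1}\{j\in X(p)\}$.
   Context: Marginal value $v(T\mid S)=v(S\cup T)-v(S)$; submodular means $v(S\cup T)+v(S\cap T)\le v(S)+v(T)$. For $p\in\mathbb{R}^N_+$, $p(S)=\sum_{j\in S}p_j$, $D(v;p)=\arg\max_{S\subseteq N}(v(S)-p(S))$. A decision map is $X:\mathbb{R}^N_+\to2^N$ with $X(p)\in D(v;p)$ for all $p$; it is maximal if for every $p$ there is no $S'\in D(v;p)$ with $X(p)\subsetneq S'$. The monopolistic seller chooses a price $p_j$ for each service and earns $u_1(p)$. *)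

theory Defs
  imports "HOL-Analysis.Analysis"
begin

definition marginal :: "('a set \<Rightarrow> real) \<Rightarrow> 'a set \<Rightarrow> 'a set \<Rightarrow> real" where
  "marginal v T S = v (S \<union> T) - v S"

definition monotone_val :: "'a set \<Rightarrow> ('a set \<Rightarrow> real) \<Rightarrow> bool" where
  "monotone_val N v \<longleftrightarrow> (\<forall>S T. S \<subseteq> T \<and> T \<subseteq> N \<longrightarrow> v S \<le> v T)"

definition submodular :: "'a set \<Rightarrow> ('a set \<Rightarrow> real) \<Rightarrow> bool" where
  "submodular N v \<longleftrightarrow>
     (\<forall>S T. S \<subseteq> N \<and> T \<subseteq> N \<longrightarrow> v (S \<union> T) + v (S \<inter> T) \<le> v S + v T)"

definition valuation :: "'a set \<Rightarrow> ('a set \<Rightarrow> real) \<Rightarrow> bool" where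
  "valuation N v \<longleftrightarrow> v {} = 0 \<and> (\<forall>S\<subseteq>N. v S \<ge> 0)"

definition price_vec :: "'a set \<Rightarrow> ('a \<Rightarrow> real) \<Rightarrow> bool" where
  "price_vec N p \<longleftrightarrow> (\<forall>j\<in>N. p j \<ge> 0)"

definition demand :: "'a set \<Rightarrow> ('a set \<Rightarrow> real) \<Rightarrow> ('a \<Rightarrow> real) \<Rightarrow> 'a set set" where
  "demand N v p = {S. S \<subseteq> N \<and> (\<forall>T. T \<subseteq> N \<longrightarrow> v T - sum p T \<le> v S - sum p S)}"

definition decision_map ::
  "'a set \<Rightarrow> ('a set \<Rightarrow> real) \<Rightarrow> (('a \<Rightarrow> real) \<Rightarrow> 'a set) \<Rightarrow> bool" where
  "decision_map N v X \<longleftrightarrow> (\<forall>p. price_vec N p \<longrightarrow> X p \<in> demand N v p)"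

definition maximal_decision_map ::
  "'a set \<Rightarrow> ('a set \<Rightarrow> real) \<Rightarrow> (('a \<Rightarrow> real) \<Rightarrow> 'a set) \<Rightarrow> bool" where
  "maximal_decision_map N v X \<longleftrightarrow> decision_map N v X \<and>
     (\<forall>p. price_vec N p \<longrightarrow> \<not> (\<exists>S'\<in>demand N v p. X p \<subset> S'))"

definition revenue :: "'a set \<Rightarrow> (('a \<Rightarrow> real) \<Rightarrow> 'a set) \<Rightarrow> ('a \<Rightarrow> real) \<Rightarrow> real" where
  "revenue N X p = (\<Sum>j\<in>N. p j * (if j \<in> X p then 1 else 0))"

end

theory Submission
  imports Defs
begin

lemma revenue_eq:
  assumes "finite N" "X p \<subseteq> N"
  shows "revenue N X p = sum p (X p)"
proof -
  have "revenue N X p = (\<Sum>j\<in>N. if j \<in> X p then p j else 0)"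
    unfolding revenue_def by (rule sum.cong) auto
  also have "\<dots> = sum p (N \<inter> X p)" using assms(1) by (simp add: sum.inter_restrict)
  also have "N \<inter> X p = X p" using assms(2) by blast
  finally show ?thesis .
qed

lemma submod_sum:
  assumes sub: "submodular N v" and fin: "finite A"
  shows "A \<inter> T = {} \<Longrightarrow> A \<union> T \<subseteq> U \<Longrightarrow> U \<subseteq> N \<Longrightarrow>
     (\<Sum>i\<in>A. v U - v (U - {i})) \<le> v (T \<union> A) - v T"
  using fin
proof (induction A rule: finite_induct)
  case empty
  then show ?case by simp
next
  case (insert a A)
  have IH: "(\<Sum>i\<in>A. v U - v (U - {i})) \<le> v (T \<union> A) - v T"
    using insert by auto
  have "U - {a} \<subseteq> N" "T \<union> A \<union> {a} \<subseteq> N" using insert by auto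
  then have s: "v ((U - {a}) \<union> (T \<union> A \<union> {a})) + v ((U - {a}) \<inter> (T \<union> A \<union> {a}))
      \<le> v (U - {a}) + v (T \<union> A \<union> {a})"
    using sub unfolding submodular_def by blast
  have e1: "(U - {a}) \<union> (T \<union> A \<union> {a}) = U" using insert by auto
  have e2: "(U - {a}) \<inter> (T \<union> A \<union> {a}) = T \<union> A" using insert by auto
  have e3: "T \<union> insert a A = T \<union> A \<union> {a}" by auto
  have "(\<Sum>i\<in>insert a A. v U - v (U - {i})) = (v U - v (U - {a})) + (\<Sum>i\<in>A. v U - v (U - {i}))"
    using insert(1,2) by simp
  then show ?case using s IH unfolding e1 e2 e3 by linarith
qed

theorem mainTheorem14:
  fixes N :: "'a set" and v :: "'a set \<Rightarrow> real" and X :: "('a \<Rightarrow> real) \<Rightarrow> 'a set"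
  assumes "finite N"
    and "valuation N v"
    and "monotone_val N v"
    and "submodular N v"
    and "maximal_decision_map N v X"
  shows "(\<exists>p. price_vec N p \<and>
            revenue N X p = (MAX S\<in>Pow N. \<Sum>i\<in>S. marginal v {i} (S - {i})))
       \<and> (\<forall>p. price_vec N p \<longrightarrow>
            revenue N X p \<le> (MAX S\<in>Pow N. \<Sum>i\<in>S. marginal v {i} (S - {i})))"
proof -
  let ?f = "\<lambda>S. \<Sum>i\<in>S. marginal v {i} (S - {i})"
  let ?M = "MAX S\<in>Pow N. ?f S"
  have finP: "finite (Pow N)" using assms(1) by simp
  have dm: "\<And>p. price_vec N p \<Longrightarrow> X p \<in> demand N v p"
    using assms(5) unfolding maximal_decision_map_def decision_map_def by blast
  have marg: "\<And>S i. i \<in> S \<Longrightarrow> marginal v {i} (S - {i}) = v S - v (S - {i})"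
    unfolding marginal_def by (simp add: insert_absorb)
  have upper: "\<forall>p. price_vec N p \<longrightarrow> revenue N X p \<le> ?M"
  proof (intro allI impI)
    fix p assume pv: "price_vec N p"
    define S where "S = X p"
    have SD: "S \<in> demand N v p" using dm[OF pv] S_def by simp
    have SN: "S \<subseteq> N" using SD unfolding demand_def by auto
    have finS: "finite S" using SN assms(1) finite_subset by blast
    have "\<forall>i\<in>S. p i \<le> marginal v {i} (S - {i})"
    proof
      fix i assume iS: "i \<in> S"
      have "v (S - {i}) - sum p (S - {i}) \<le> v S - sum p S"
      proof -
        have "S - {i} \<subseteq> N" using SN by blast
        then show ?thesis using SD unfolding demand_def by blast
      qed
      moreover have "sum p S = p i + sum p (S - {i})"
        using finS iS by (simp add: sum.remove)
      ultimately show "p i \<le> marginal v {i} (S - {i})" using marg[OF iS] by simp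
    qed
    then have "sum p S \<le> ?f S" by (intro sum_mono) blast
    also have "?f S \<le> ?M" using finP SN by (intro Max_ge) auto
    finally show "revenue N X p \<le> ?M"
      using revenue_eq[OF assms(1)] SN S_def by simp
  qed
  obtain S where SP: "S \<in> Pow N" and SM: "?f S = ?M"
    using finP by (metis (no_types, lifting) Max_in Pow_not_empty finite_imageI image_iff image_is_empty)
  have SN: "S \<subseteq> N" using SP by simp
  have finS: "finite S" using SN assms(1) finite_subset by blast
  define m where "m i = v S - v (S - {i})" for i
  define p where "p j = (if j \<in> S then m j else v N + 1)" for j
  have vpos: "v N \<ge> 0" using assms(2) unfolding valuation_def by simp
  have mpos: "\<And>i. m i \<ge> 0" unfolding m_def using assms(3) SN unfolding monotone_val_def
    by (metis Diff_subset diff_ge_0_iff_ge)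
  have ppos: "\<And>j. p j \<ge> 0" unfolding p_def using mpos vpos by auto
  have pv: "price_vec N p" unfolding price_vec_def using ppos by simp
  have key: "\<And>T. T \<subseteq> S \<Longrightarrow> (\<Sum>i\<in>S - T. m i) \<le> v S - v T"
  proof -
    fix T assume TS: "T \<subseteq> S"
    have "(\<Sum>i\<in>S - T. v S - v (S - {i})) \<le> v (T \<union> (S - T)) - v T"
      using submod_sum[OF assms(4), of "S - T" T S] finS SN TS by auto
    moreover have "T \<union> (S - T) = S" using TS by auto
    ultimately show "(\<Sum>i\<in>S - T. m i) \<le> v S - v T" unfolding m_def by simp
  qed
  have psS: "sum p S = sum m S" unfolding p_def by (rule sum.cong) auto
  have vS0: "v S - sum p S \<ge> 0" using key[of "{}"] assms(2) psS unfolding valuation_def by simp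
  have bad: "\<And>T. T \<subseteq> N \<Longrightarrow> \<not> T \<subseteq> S \<Longrightarrow> v T - sum p T < 0"
  proof -
    fix T assume TN: "T \<subseteq> N" and nT: "\<not> T \<subseteq> S"
    then obtain j where jT: "j \<in> T" "j \<notin> S" by blast
    have finT: "finite T" using TN assms(1) finite_subset by blast
    have "p j \<le> sum p T" using finT jT ppos by (intro member_le_sum) auto
    moreover have "p j = v N + 1" using jT p_def by simp
    moreover have "v T \<le> v N" using assms(3) TN unfolding monotone_val_def by blast
    ultimately show "v T - sum p T < 0" by linarith
  qed
  have SD: "S \<in> demand N v p"
    unfolding demand_def
  proof (intro CollectI conjI allI impI)
    show "S \<subseteq> N" by (rule SN)
    fix T assume TN: "T \<subseteq> N"
    show "v T - sum p T \<le> v S - sum p S"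
    proof (cases "T \<subseteq> S")
      case True
      have "sum p S = sum p T + sum p (S - T)"
        using finS True by (metis add.commute sum.subset_diff)
      moreover have "sum p (S - T) = sum m (S - T)" unfolding p_def by (rule sum.cong) auto
      ultimately show ?thesis using key[OF True] by simp
    next
      case False
      then show ?thesis using bad[OF TN] vS0 by fastforce
    qed
  qed
  have XD: "X p \<in> demand N v p" using dm[OF pv] .
  have XN: "X p \<subseteq> N" using XD unfolding demand_def by auto
  have XS: "X p \<subseteq> S"
  proof (rule ccontr)
    assume "\<not> X p \<subseteq> S"
    then have "v (X p) - sum p (X p) < 0" using bad XN by blast
    moreover have "v S - sum p S \<le> v (X p) - sum p (X p)" using XD SN unfolding demand_def by auto
    ultimately show False using vS0 by linarith
  qed
  have "\<not> X p \<subset> S" using assms(5) pv SD unfolding maximal_decision_map_def by blast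
  then have XeS: "X p = S" using XS by blast
  have "revenue N X p = sum p S" using revenue_eq[of N X p, OF assms(1) XN] XeS by simp
  also have "\<dots> = ?f S" unfolding psS m_def by (rule sum.cong) (auto simp: marg)
  finally have "revenue N X p = ?M" using SM by simp
  then show ?thesis using pv upper by blast
qed

end
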